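(* Let $G$ be a finite connected multigraph and let $H$ be a connected subgraph of $G$. Then $$\tau(H)\,\tau(G/\!/H)\le \tau(G).$$
   Context: For a finite connected multigraph $K$, $\tau(K)$ denotes the number of spanning trees of $K$, where a spanning tree is a subgraph of $K$ that is maximal among subgraphs without cycles. For a subgraph $H$ of $G$, $G/\!/H$ denotes the multigraph obtained from $G$ by contracting all edges of $H$ (edges of $G$ not in $H$ whose endpoints both lie in $V(H)$ become loops). *)

theory Defs
  imports Main
begin

text \<open>A finite multigraph is given by a vertex set V, an edge set E and an endpoint
  map ends; the edge e joins fst (ends e) and snd (ends e) (orientation ignored;
  loops are edges with equal endpoints, parallel edges are distinct edges with
  the same endpoints).\<close>

definition multigraph :: "'v set \<Rightarrow> 'e set \<Rightarrow> ('e \<Rightarrow> 'v \<times> 'v) \<Rightarrow> bool" where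
  "multigraph V E ends \<longleftrightarrow> finite V \<and> finite E \<and>
     (\<forall>e\<in>E. fst (ends e) \<in> V \<and> snd (ends e) \<in> V)"

definition adj :: "'e set \<Rightarrow> ('e \<Rightarrow> 'v \<times> 'v) \<Rightarrow> 'v \<Rightarrow> 'v \<Rightarrow> bool" where
  "adj E ends u v \<longleftrightarrow> (\<exists>e\<in>E. ends e = (u, v) \<or> ends e = (v, u))"

definition connected_mg :: "'v set \<Rightarrow> 'e set \<Rightarrow> ('e \<Rightarrow> 'v \<times> 'v) \<Rightarrow> bool" where
  "connected_mg V E ends \<longleftrightarrow> V \<noteq> {} \<and> (\<forall>u\<in>V. \<forall>v\<in>V. (adj E ends)\<^sup>*\<^sup>* u v)"

definition submultigraph ::
  "'v set \<Rightarrow> 'e set \<Rightarrow> 'v set \<Rightarrow> 'e set \<Rightarrow> ('e \<Rightarrow> 'v \<times> 'v) \<Rightarrow> bool" where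
  "submultigraph VH EH VG EG ends \<longleftrightarrow> VH \<subseteq> VG \<and> EH \<subseteq> EG \<and>
     (\<forall>e\<in>EH. fst (ends e) \<in> VH \<and> snd (ends e) \<in> VH)"

text \<open>A cycle: distinct vertices v_0..v_{n-1} (n >= 1) and distinct edges e_0..e_{n-1}
  with e_i joining v_i and v_{(i+1) mod n}. (n = 1: a loop; n = 2: two parallel edges.)\<close>

definition has_cycle :: "'e set \<Rightarrow> ('e \<Rightarrow> 'v \<times> 'v) \<Rightarrow> bool" where
  "has_cycle F ends \<longleftrightarrow> (\<exists>vs es. length vs = length es \<and> length es \<ge> 1 \<and>
     distinct vs \<and> distinct es \<and> set es \<subseteq> F \<and>
     (\<forall>i<length es. ends (es ! i) = (vs ! i, vs ! ((i + 1) mod length es)) \<or>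
                    ends (es ! i) = (vs ! ((i + 1) mod length es), vs ! i)))"

text \<open>Spanning tree: a maximal cycle-free subgraph (it contains all vertices, so it is
  determined by its edge set).\<close>

definition spanning_tree :: "'e set \<Rightarrow> ('e \<Rightarrow> 'v \<times> 'v) \<Rightarrow> 'e set \<Rightarrow> bool" where
  "spanning_tree E ends T \<longleftrightarrow> T \<subseteq> E \<and> \<not> has_cycle T ends \<and>
     (\<forall>T'. T \<subseteq> T' \<and> T' \<subseteq> E \<and> \<not> has_cycle T' ends \<longrightarrow> T' = T)"

definition tau :: "'e set \<Rightarrow> ('e \<Rightarrow> 'v \<times> 'v) \<Rightarrow> nat" where
  "tau E ends = card {T. spanning_tree E ends T}"

text \<open>Contraction G//H: every vertex of V(H) is identified to the single vertex None,
  other vertices x become Some x; the edges are E(G) - E(H) with endpoints mapped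
  (edges with both ends in V(H) become loops at None).\<close>

definition contr_vertex :: "'v set \<Rightarrow> 'v \<Rightarrow> 'v option" where
  "contr_vertex VH x = (if x \<in> VH then None else Some x)"

definition contr_V :: "'v set \<Rightarrow> 'v set \<Rightarrow> 'v option set" where
  "contr_V VG VH = contr_vertex VH ` VG"

definition contr_E :: "'e set \<Rightarrow> 'e set \<Rightarrow> 'e set" where
  "contr_E EG EH = EG - EH"

definition contr_ends :: "'v set \<Rightarrow> ('e \<Rightarrow> 'v \<times> 'v) \<Rightarrow> 'e \<Rightarrow> 'v option \<times> 'v option" where
  "contr_ends VH ends e = map_prod (contr_vertex VH) (contr_vertex VH) (ends e)"

end

theory Submission
  imports Defs
begin

definition conn where "conn F ends = (adj F ends)\<^sup>*\<^sup>*"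

lemma conn_refl[simp]: "conn F ends x x" by (simp add: conn_def)

lemma conn_step: "conn F ends x y \<Longrightarrow> adj F ends y z \<Longrightarrow> conn F ends x z"
  unfolding conn_def by (rule rtranclp.rtrancl_into_rtrancl)

lemma conn_trans: "conn F ends x y \<Longrightarrow> conn F ends y z \<Longrightarrow> conn F ends x z"
  unfolding conn_def by (rule rtranclp_trans)

lemma conn_adj: "adj F ends x y \<Longrightarrow> conn F ends x y"
  unfolding conn_def by (rule r_into_rtranclp)

lemma conn_induct[consumes 1, case_names base step]:
  assumes "conn F ends a b" "P a"
    "\<And>y z. conn F ends a y \<Longrightarrow> adj F ends y z \<Longrightarrow> P y \<Longrightarrow> P z"
  shows "P b"
proof -
  have "(adj F ends)\<^sup>*\<^sup>* a b" using assms(1) unfolding conn_def .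
  then show ?thesis
  proof (induction rule: rtranclp_induct)
    case base then show ?case by (rule assms(2))
  next
    case (step y z) then show ?case using assms(3) unfolding conn_def by blast
  qed
qed

lemma adj_sym: "adj F ends u v \<Longrightarrow> adj F ends v u"
  unfolding adj_def by blast

lemma conn_sym: "conn F ends u v \<Longrightarrow> conn F ends v u"
proof (induct rule: conn_induct)
  case base then show ?case by simp
next
  case (step y z)
  then show ?case using adj_sym conn_adj conn_trans by metis
qed

lemma adj_mono: "F \<subseteq> F' \<Longrightarrow> adj F ends u v \<Longrightarrow> adj F' ends u v"
  unfolding adj_def by blast

lemma conn_mono:
  assumes "F \<subseteq> F'" "conn F ends u v" shows "conn F' ends u v"
  using assms(2)
proof (induct rule: conn_induct)
  case base then show ?case by simp
next
  case (step y z)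
  then show ?case using adj_mono[OF assms(1)] conn_step by metis
qed

lemma conn_edge: "e \<in> F \<Longrightarrow> conn F ends (fst (ends e)) (snd (ends e))"
  unfolding adj_def by (rule conn_adj[unfolded adj_def]) auto

lemma spath_exists:
  assumes "conn F ends u v"
  shows "\<exists>vs. vs \<noteq> [] \<and> hd vs = u \<and> last vs = v \<and> distinct vs \<and>
    (\<forall>i. Suc i < length vs \<longrightarrow> adj F ends (vs!i) (vs!Suc i))"
  using assms
proof (induct rule: conn_induct)
  case base
  show ?case by (rule exI[of _ "[u]"]) simp
next
  case (step w x)
  then obtain vs where vs: "vs \<noteq> []" "hd vs = u" "last vs = w" "distinct vs"
    "\<forall>i. Suc i < length vs \<longrightarrow> adj F ends (vs!i) (vs!Suc i)" by blast
  show ?case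
  proof (cases "x \<in> set vs")
    case True
    then obtain j where j: "j < length vs" "vs!j = x" by (metis in_set_conv_nth)
    let ?ws = "take (Suc j) vs"
    have "?ws \<noteq> []" using vs(1) by simp
    moreover have "hd ?ws = u" using vs(1,2) by (simp add: hd_take)
    moreover have "last ?ws = x" using j by (simp add: take_Suc_conv_app_nth)
    moreover have "distinct ?ws" using vs(4) by simp
    moreover have "\<forall>i. Suc i < length ?ws \<longrightarrow> adj F ends (?ws!i) (?ws!Suc i)" using vs(5) by simp
    ultimately show ?thesis by blast
  next
    case False
    let ?ws = "vs @ [x]"
    have "\<forall>i. Suc i < length ?ws \<longrightarrow> adj F ends (?ws!i) (?ws!Suc i)"
    proof (intro allI impI)
      fix i assume i: "Suc i < length ?ws"
      show "adj F ends (?ws!i) (?ws!Suc i)"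
      proof (cases "Suc i < length vs")
        case True then show ?thesis using vs(5) by (simp add: nth_append)
      next
        case False
        then have "Suc i = length vs" using i by simp
        then have "i = length vs - 1" by simp
        then have "?ws!i = w" "?ws!Suc i = x" using vs(1,3) \<open>Suc i = length vs\<close>
          by (auto simp: nth_append last_conv_nth)
        then show ?thesis using step(2) by simp
      qed
    qed
    moreover have "hd ?ws = u" using vs by simp
    ultimately show ?thesis using vs False by (intro exI[of _ ?ws]) auto
  qed
qed

lemma cycle_from_conn:
  assumes f: "f \<in> F" and c: "conn (F - {f}) ends (fst (ends f)) (snd (ends f))"
  shows "has_cycle F ends"
proof (cases "fst (ends f) = snd (ends f)")
  case True
  show ?thesis unfolding has_cycle_def
    apply (rule exI[of _ "[fst (ends f)]"], rule exI[of _ "[f]"])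
    using f True by (auto simp: prod_eq_iff)
next
  case False
  obtain vs where vs: "vs \<noteq> []" "hd vs = fst (ends f)" "last vs = snd (ends f)" "distinct vs"
    "\<forall>i. Suc i < length vs \<longrightarrow> adj (F - {f}) ends (vs!i) (vs!Suc i)"
    using spath_exists[OF c] by blast
  define n where "n = length vs"
  have n2: "n \<ge> 2"
  proof (rule ccontr)
    assume "\<not> n \<ge> 2"
    then have "n = 1" using vs(1) n_def by (cases vs) (auto simp: Suc_le_eq)
    then have "hd vs = last vs" using vs(1) n_def by (cases vs) auto
    then show False using False vs by simp
  qed
  define g where "g i = (SOME e. e \<in> F - {f} \<and> (ends e = (vs!i, vs!Suc i) \<or> ends e = (vs!Suc i, vs!i)))" for i
  have g: "g i \<in> F - {f} \<and> (ends (g i) = (vs!i, vs!Suc i) \<or> ends (g i) = (vs!Suc i, vs!i))"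
    if "Suc i < n" for i
    unfolding g_def by (rule someI_ex) (use vs(5) that in \<open>auto simp: adj_def n_def\<close>)
  define es where "es = map g [0..<n-1] @ [f]"
  have les: "length es = n" using n2 by (simp add: es_def)
  have inj: "inj_on g {0..<n-1}"
  proof (rule inj_onI)
    fix i j assume i: "i \<in> {0..<n-1}" and j: "j \<in> {0..<n-1}" and e: "g i = g j"
    have gi: "ends (g i) = (vs!i, vs!Suc i) \<or> ends (g i) = (vs!Suc i, vs!i)" using g i by auto
    have gj: "ends (g j) = (vs!j, vs!Suc j) \<or> ends (g j) = (vs!Suc j, vs!j)" using g j by auto
    have ii: "i < length vs" "Suc i < length vs" "j < length vs" "Suc j < length vs"
      using i j n_def by auto
    from gi gj e have "(vs!i = vs!j \<and> vs!Suc i = vs!Suc j) \<or> (vs!i = vs!Suc j \<and> vs!Suc i = vs!j)"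
      by auto
    then show "i = j" using ii vs(4) by (auto simp: nth_eq_iff_index_eq)
  qed
  have dg: "distinct (map g [0..<n-1])" using inj by (simp add: distinct_map)
  have fn: "f \<notin> set (map g [0..<n-1])"
  proof
    assume "f \<in> set (map g [0..<n-1])"
    then obtain x where x: "x < n - 1" "f = g x" by auto
    then have "Suc x < n" by linarith
    then show False using g[of x] x(2) by simp
  qed
  have des: "distinct es" using dg fn by (simp add: es_def)
  have ses: "set es \<subseteq> F" using g f by (auto simp: es_def)
  have cyc: "\<forall>i<length es. ends (es ! i) = (vs ! i, vs ! ((i + 1) mod length es)) \<or>
                    ends (es ! i) = (vs ! ((i + 1) mod length es), vs ! i)"
  proof (intro allI impI)
    fix i assume i: "i < length es"
    show "ends (es ! i) = (vs ! i, vs ! ((i + 1) mod length es)) \<or>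
                    ends (es ! i) = (vs ! ((i + 1) mod length es), vs ! i)"
    proof (cases "i < n - 1")
      case True
      then have "es ! i = g i" by (simp add: es_def nth_append)
      moreover have "(i+1) mod length es = Suc i" using True les by simp
      ultimately show ?thesis using g[of i] True by auto
    next
      case False
      then have ii: "i = n - 1" using i les by simp
      then have "es ! i = f" by (simp add: es_def nth_append)
      moreover have "(i+1) mod length es = 0" using ii les n2 by simp
      moreover have "vs!0 = fst (ends f)" using vs(1,2) by (simp add: hd_conv_nth)
      moreover have "vs!i = snd (ends f)" using vs(1,3) ii n_def by (simp add: last_conv_nth)
      ultimately show ?thesis by (simp add: prod_eq_iff)
    qed
  qed
  show ?thesis unfolding has_cycle_def
    apply (rule exI[of _ vs], rule exI[of _ es])
    using les n_def n2 vs(4) des ses cyc by auto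
qed

lemma mod_ne_aux:
  fixes i k n :: nat
  assumes "i < n" "k + 2 \<le> n"
  shows "(i+1+k) mod n \<noteq> i"
proof (cases "i+1+k < n")
  case True then show ?thesis by simp
next
  case False
  then have "(i+1+k) mod n = (i+1+k-n) mod n" by (simp add: le_mod_geq)
  also have "\<dots> = i+1+k-n" using assms by simp
  finally show ?thesis using assms False by linarith
qed

lemma cycle_conn:
  assumes "has_cycle F ends"
  shows "\<exists>C\<subseteq>F. C \<noteq> {} \<and> (\<forall>f\<in>C. conn (C - {f}) ends (fst (ends f)) (snd (ends f)))"
proof -
  obtain vs es where c: "length vs = length es" "length es \<ge> 1" "distinct vs" "distinct es" "set es \<subseteq> F"
    "\<forall>i<length es. ends (es ! i) = (vs ! i, vs ! ((i + 1) mod length es)) \<or> ends (es ! i) = (vs ! ((i + 1) mod length es), vs ! i)"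
    using assms unfolding has_cycle_def by blast
  define n where "n = length es"
  have main: "conn (set es - {es!i}) ends (vs!i) (vs!((i+1) mod n))" if i: "i < n" for i
  proof -
    have k: "conn (set es - {es!i}) ends (vs!((i+1) mod n)) (vs!((i+1+k) mod n))" if "k \<le> n - 1" for k
      using that
    proof (induction k)
      case 0 show ?case by simp
    next
      case (Suc k)
      let ?j = "(i+1+k) mod n"
      have jn: "?j < n" using i by simp
      have ne: "?j \<noteq> i" using mod_ne_aux[OF i, of k] Suc.prems by simp
      have e: "es!?j \<in> set es - {es!i}" using jn ne c(4) i by (simp add: nth_eq_iff_index_eq n_def)
      have m: "(?j + 1) mod n = (i+1+Suc k) mod n" by (simp add: mod_Suc_eq)
      have "ends (es ! ?j) = (vs ! ?j, vs ! ((?j + 1) mod n)) \<or> ends (es ! ?j) = (vs ! ((?j + 1) mod n), vs ! ?j)"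
        using c(6) jn n_def by blast
      then have adj: "adj (set es - {es!i}) ends (vs!?j) (vs!((i+1+Suc k) mod n))"
        using e m unfolding adj_def by metis
      from Suc.IH Suc.prems adj show ?case by (meson conn_step Suc_leD)
    qed
    from k[of "n-1"] have "conn (set es - {es!i}) ends (vs!((i+1) mod n)) (vs!((i+1+(n-1)) mod n))" by simp
    moreover have "i+1+(n-1) = i + n" using c(2) n_def by simp
    then have "(i+1+(n-1)) mod n = i" using i by simp
    ultimately show ?thesis using conn_sym by metis
  qed
  show ?thesis
  proof (intro exI[of _ "set es"] conjI ballI)
    show "set es \<subseteq> F" by (rule c(5))
    show "set es \<noteq> {}" using c(2) by auto
    fix f assume "f \<in> set es"
    then obtain i where i: "i < n" "f = es!i" by (metis in_set_conv_nth n_def)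
    then have "ends f = (vs ! i, vs ! ((i + 1) mod n)) \<or> ends f = (vs ! ((i + 1) mod n), vs ! i)"
      using c(6) n_def by blast
    then show "conn (set es - {f}) ends (fst (ends f)) (snd (ends f))"
      using main[OF i(1)] i(2) conn_sym by (metis fst_conv snd_conv)
  qed
qed

lemma acyc_iff: "\<not> has_cycle F ends \<longleftrightarrow> (\<forall>f\<in>F. \<not> conn (F - {f}) ends (fst (ends f)) (snd (ends f)))"
proof
  assume "\<not> has_cycle F ends"
  then show "\<forall>f\<in>F. \<not> conn (F - {f}) ends (fst (ends f)) (snd (ends f))"
    using cycle_from_conn[of _ F ends] by metis
next
  assume a: "\<forall>f\<in>F. \<not> conn (F - {f}) ends (fst (ends f)) (snd (ends f))"
  show "\<not> has_cycle F ends"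
  proof
    assume "has_cycle F ends"
    from cycle_conn[OF this] obtain C where C: "C \<subseteq> F" "C \<noteq> {}" "\<forall>f\<in>C. conn (C - {f}) ends (fst (ends f)) (snd (ends f))"
      by (elim exE conjE)
    then obtain f where fC: "f \<in> C" by blast
    have sb: "C - {f} \<subseteq> F - {f}" using C(1) by blast
    have "conn (F - {f}) ends (fst (ends f)) (snd (ends f))"
      by (rule conn_mono[OF sb bspec[OF C(3) fC]])
    moreover have "f \<in> F" using C(1) fC by blast
    ultimately show False using a by simp
  qed
qed


lemma edge_split:
  assumes "conn (S \<union> {e}) ends x y" "ends e = (a, b)"
  shows "conn S ends x y \<or> (conn S ends x a \<and> conn S ends b y) \<or> (conn S ends x b \<and> conn S ends a y)"
  using assms(1)
proof (induct rule: conn_induct)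
  case base then show ?case by simp
next
  case (step w z)
  from step(2) obtain g where g: "g \<in> S \<union> {e}" "ends g = (w, z) \<or> ends g = (z, w)"
    unfolding adj_def by blast
  show ?case
  proof (cases "g \<in> S")
    case True
    then have "adj S ends w z" using g unfolding adj_def by blast
    then show ?thesis using step(3) conn_step by metis
  next
    case False
    then have "g = e" using g by blast
    then have wz: "(w = a \<and> z = b) \<or> (w = b \<and> z = a)" using g assms(2) by auto
    then show ?thesis using step(3) by auto
  qed
qed

lemma add_edge_acyclic:
  assumes T: "\<not> has_cycle T ends" and e: "ends e = (a, b)" and nc: "\<not> conn T ends a b"
  shows "\<not> has_cycle (insert e T) ends"
proof -
  have eT: "e \<notin> T" using conn_edge[of e T ends] e nc by auto
  have T': "\<forall>f\<in>T. \<not> conn (T - {f}) ends (fst (ends f)) (snd (ends f))" using T by (simp only: acyc_iff)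
  show ?thesis unfolding acyc_iff
  proof
    fix f assume f: "f \<in> insert e T"
    show "\<not> conn (insert e T - {f}) ends (fst (ends f)) (snd (ends f))"
    proof (cases "f = e")
      case True
      then have "insert e T - {f} = T" using eT by auto
      then show ?thesis using True e nc by simp
    next
      case False
      then have fT: "f \<in> T" using f by simp
      have eq: "insert e T - {f} = (T - {f}) \<union> {e}" using False by auto
      show ?thesis
      proof
        assume "conn (insert e T - {f}) ends (fst (ends f)) (snd (ends f))"
        then have "conn ((T - {f}) \<union> {e}) ends (fst (ends f)) (snd (ends f))" using eq by simp
        from edge_split[OF this e] bspec[OF T' fT]
        have "(conn (T - {f}) ends (fst (ends f)) a \<and> conn (T - {f}) ends b (snd (ends f))) \<or>
              (conn (T - {f}) ends (fst (ends f)) b \<and> conn (T - {f}) ends a (snd (ends f)))" by simp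
        then have "(conn T ends (fst (ends f)) a \<and> conn T ends b (snd (ends f))) \<or>
              (conn T ends (fst (ends f)) b \<and> conn T ends a (snd (ends f)))"
          using conn_mono[of "T - {f}" T ends] by (metis Diff_subset)
        moreover have ff: "conn T ends (fst (ends f)) (snd (ends f))" using conn_edge[OF fT] .
        ultimately have "conn T ends a b"
          using conn_sym[of T ends] conn_trans by metis
        then show False using nc by simp
      qed
    qed
  qed
qed

lemma st_iff:
  "spanning_tree E ends T \<longleftrightarrow> T \<subseteq> E \<and> \<not> has_cycle T ends \<and>
     (\<forall>e\<in>E. conn T ends (fst (ends e)) (snd (ends e)))"
proof
  assume st: "spanning_tree E ends T"
  then have TE: "T \<subseteq> E" and ac: "\<not> has_cycle T ends"
    and mx: "\<And>T'. T \<subseteq> T' \<Longrightarrow> T' \<subseteq> E \<Longrightarrow> \<not> has_cycle T' ends \<Longrightarrow> T' = T"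
    unfolding spanning_tree_def by blast+
  have "conn T ends (fst (ends e)) (snd (ends e))" if e: "e \<in> E" for e
  proof (rule ccontr)
    assume nc: "\<not> conn T ends (fst (ends e)) (snd (ends e))"
    have "\<not> has_cycle (insert e T) ends"
      by (rule add_edge_acyclic[OF ac _ nc]) simp
    then have "insert e T = T" using mx[of "insert e T"] TE e by blast
    then have "e \<in> T" by blast
    then show False using nc conn_edge by metis
  qed
  then show "T \<subseteq> E \<and> \<not> has_cycle T ends \<and> (\<forall>e\<in>E. conn T ends (fst (ends e)) (snd (ends e)))"
    using TE ac by blast
next
  assume a: "T \<subseteq> E \<and> \<not> has_cycle T ends \<and> (\<forall>e\<in>E. conn T ends (fst (ends e)) (snd (ends e)))"
  have "T' = T" if h: "T \<subseteq> T'" "T' \<subseteq> E" "\<not> has_cycle T' ends" for T'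
  proof (rule ccontr)
    assume "T' \<noteq> T"
    then obtain e where e: "e \<in> T'" "e \<notin> T" using h by blast
    have sb: "T \<subseteq> T' - {e}" using h e by blast
    have "e \<in> E" using h e by blast
    then have "conn T ends (fst (ends e)) (snd (ends e))" using a by simp
    then have "conn (T' - {e}) ends (fst (ends e)) (snd (ends e))"
      by (rule conn_mono[OF sb])
    then have "has_cycle T' ends" using cycle_from_conn e by metis
    then show False using h by simp
  qed
  then show "spanning_tree E ends T" using a unfolding spanning_tree_def by blast
qed

lemma contr_ends_eq:
  "contr_ends VH ends e = (contr_vertex VH (fst (ends e)), contr_vertex VH (snd (ends e)))"
  unfolding contr_ends_def by (cases "ends e") simp

lemma contract_conn:
  assumes S: "\<forall>e\<in>S. fst (ends e) \<in> VH \<and> snd (ends e) \<in> VH"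
    and c: "conn (S \<union> F) ends x y"
  shows "conn F (contr_ends VH ends) (contr_vertex VH x) (contr_vertex VH y)"
  using c
proof (induct rule: conn_induct)
  case base then show ?case by simp
next
  case (step w z)
  from step(2) obtain g where g: "g \<in> S \<union> F" "ends g = (w, z) \<or> ends g = (z, w)"
    unfolding adj_def by blast
  show ?case
  proof (cases "g \<in> S")
    case True
    then have "contr_vertex VH w = contr_vertex VH z" using S g
      by (auto simp: contr_vertex_def)
    then show ?thesis using step(3) by simp
  next
    case False
    then have "g \<in> F" using g by blast
    then have "adj F (contr_ends VH ends) (contr_vertex VH w) (contr_vertex VH z)"
      using g unfolding adj_def contr_ends_eq by (metis fst_conv snd_conv)
    then show ?thesis using step(3) conn_step by metis
  qed
qed

lemma lift_conn:
  assumes T1: "\<forall>a\<in>VH. \<forall>b\<in>VH. conn T1 ends a b"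
    and c: "conn F (contr_ends VH ends) p q"
    and px: "contr_vertex VH x = p" and qy: "contr_vertex VH y = q"
  shows "conn (F \<union> T1) ends x y"
  using c qy
proof (induct arbitrary: y rule: conn_induct)
  have H: "conn (F \<union> T1) ends u v" if "contr_vertex VH u = contr_vertex VH v" for u v
  proof (cases "u \<in> VH")
    case True
    then have "v \<in> VH" using that by (auto simp: contr_vertex_def split: if_splits)
    then have "conn T1 ends u v" using T1 True by simp
    then show ?thesis using conn_mono[of T1 "F \<union> T1" ends] by simp
  next
    case False
    then have "v = u" using that by (auto simp: contr_vertex_def split: if_splits)
    then show ?thesis by simp
  qed
  {
    case base
    then show ?case using H px by simp
  next
    case (step p' q')
    from step(2) obtain g where g: "g \<in> F"
      "contr_ends VH ends g = (p', q') \<or> contr_ends VH ends g = (q', p')"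
      unfolding adj_def by blast
    obtain c d where cd: "ends g = (c, d)" by (cases "ends g")
    have adjcd: "conn (F \<union> T1) ends c d" "conn (F \<union> T1) ends d c"
      using conn_edge[of g "F \<union> T1" ends] g(1) cd conn_sym by auto
    from g(2) have "(contr_vertex VH c = p' \<and> contr_vertex VH d = q') \<or>
        (contr_vertex VH d = p' \<and> contr_vertex VH c = q')"
      unfolding contr_ends_eq cd by auto
    then show ?case
    proof
      assume h: "contr_vertex VH c = p' \<and> contr_vertex VH d = q'"
      have "conn (F \<union> T1) ends x c" using step(3) h by blast
      moreover have "conn (F \<union> T1) ends d y" using H h step(4) by simp
      ultimately show ?thesis using adjcd conn_trans by metis
    next
      assume h: "contr_vertex VH d = p' \<and> contr_vertex VH c = q'"
      have "conn (F \<union> T1) ends x d" using step(3) h by blast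
      moreover have "conn (F \<union> T1) ends c y" using H h step(4) by simp
      ultimately show ?thesis using adjcd conn_trans by metis
    qed
  }
qed


theorem lemma3p1:
  fixes VG VH :: "'v set" and EG EH :: "'e set" and ends :: "'e \<Rightarrow> 'v \<times> 'v"
  assumes "multigraph VG EG ends"
    and "connected_mg VG EG ends"
    and "submultigraph VH EH VG EG ends"
    and "connected_mg VH EH ends"
  shows "tau EH ends * tau (contr_E EG EH) (contr_ends VH ends) \<le> tau EG ends"
proof -
  let ?cv = "contr_vertex VH" and ?ce = "contr_ends VH ends"
  define S1 where "S1 = {T. spanning_tree EH ends T}"
  define S2 where "S2 = {T. spanning_tree (EG - EH) ?ce T}"
  define S where "S = {T. spanning_tree EG ends T}"
  have finEG: "finite EG" using assms(1) unfolding multigraph_def by blast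
  have sub: "EH \<subseteq> EG" "\<forall>e\<in>EH. fst (ends e) \<in> VH \<and> snd (ends e) \<in> VH"
    using assms(3) unfolding submultigraph_def by blast+
  have finS: "finite S" unfolding S_def spanning_tree_def
    by (rule finite_subset[of _ "Pow EG"]) (use finEG in auto)
  have S1sub: "A \<subseteq> EH" if "A \<in> S1" for A using that unfolding S1_def spanning_tree_def by blast
  have S2sub: "B \<subseteq> EG - EH" if "B \<in> S2" for B using that unfolding S2_def spanning_tree_def by blast
  have un: "A \<union> B \<in> S" if A: "A \<in> S1" and B: "B \<in> S2" for A B
  proof -
    from A have A': "A \<subseteq> EH" "\<not> has_cycle A ends" "\<forall>e\<in>EH. conn A ends (fst (ends e)) (snd (ends e))"
      unfolding S1_def st_iff by blast+
    from B have B': "B \<subseteq> EG - EH" "\<not> has_cycle B ?ce" "\<forall>e\<in>EG - EH. conn B ?ce (fst (?ce e)) (snd (?ce e))"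
      unfolding S2_def st_iff contr_E_def by blast+
    have VHc: "\<forall>u\<in>VH. \<forall>v\<in>VH. conn A ends u v"
    proof (intro ballI)
      fix u v assume "u \<in> VH" "v \<in> VH"
      then have "(adj EH ends)\<^sup>*\<^sup>* u v" using assms(4) unfolding connected_mg_def by blast
      then show "conn A ends u v"
      proof (induction rule: rtranclp_induct)
        case base then show ?case by simp
      next
        case (step w z)
        then obtain g where g: "g \<in> EH" "ends g = (w, z) \<or> ends g = (z, w)" unfolding adj_def by blast
        then have "conn A ends w z" using A'(3) conn_sym by (metis fst_conv snd_conv)
        then show ?case using step.IH conn_trans by metis
      qed
    qed
    have sp: "\<forall>e\<in>EG. conn (A \<union> B) ends (fst (ends e)) (snd (ends e))"
    proof
      fix e assume e: "e \<in> EG"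
      show "conn (A \<union> B) ends (fst (ends e)) (snd (ends e))"
      proof (cases "e \<in> EH")
        case True
        then have "conn A ends (fst (ends e)) (snd (ends e))" using A'(3) by simp
        then show ?thesis using conn_mono[of A "A \<union> B" ends] by simp
      next
        case False
        then have "conn B ?ce (?cv (fst (ends e))) (?cv (snd (ends e)))"
          using B'(3) e contr_ends_eq[of VH ends e] by (metis DiffI fst_conv snd_conv)
        from lift_conn[OF VHc this refl refl] show ?thesis by (simp add: Un_commute)
      qed
    qed
    have ac: "\<not> has_cycle (A \<union> B) ends"
    proof
      assume "has_cycle (A \<union> B) ends"
      from cycle_conn[OF this] obtain C where C: "C \<subseteq> A \<union> B" "C \<noteq> {}" "\<forall>f\<in>C. conn (C - {f}) ends (fst (ends f)) (snd (ends f))"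
        by (elim exE conjE)
      show False
      proof (cases "C \<subseteq> A")
        case True
        obtain f where f: "f \<in> C" using C(2) by blast
        have sb: "C - {f} \<subseteq> A - {f}" using True by blast
        have "conn (A - {f}) ends (fst (ends f)) (snd (ends f))"
          by (rule conn_mono[OF sb bspec[OF C(3) f]])
        moreover have "f \<in> A" using f True by blast
        ultimately have "has_cycle A ends" by (rule cycle_from_conn[rotated])
        then show False using A'(2) by simp
      next
        case False
        then obtain f where f: "f \<in> C" "f \<notin> A" by blast
        then have fB: "f \<in> B" using C(1) by blast
        have "C - {f} \<subseteq> A \<union> (B - {f})" using C(1) by blast
        then have c1: "conn (A \<union> (B - {f})) ends (fst (ends f)) (snd (ends f))"
          by (rule conn_mono[OF _ bspec[OF C(3) f(1)]])
        have AV: "\<forall>e\<in>A. fst (ends e) \<in> VH \<and> snd (ends e) \<in> VH" using sub(2) A'(1) by blast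
        have "conn (B - {f}) ?ce (?cv (fst (ends f))) (?cv (snd (ends f)))"
          by (rule contract_conn[OF AV c1])
        then have "conn (B - {f}) ?ce (fst (?ce f)) (snd (?ce f))" by (simp add: contr_ends_eq)
        then have "has_cycle B ?ce" by (rule cycle_from_conn[OF fB])
        then show False using B'(2) by simp
      qed
    qed
    have "A \<union> B \<subseteq> EG" using A'(1) B'(1) sub(1) by blast
    then show ?thesis unfolding S_def st_iff using sp ac by blast
  qed
  have inj: "inj_on (\<lambda>(A, B). A \<union> B) (S1 \<times> S2)"
  proof (rule inj_onI, clarify)
    fix A B A' B' assume h: "A \<in> S1" "B \<in> S2" "A' \<in> S1" "B' \<in> S2" "A \<union> B = A' \<union> B'"
    have "A = (A \<union> B) \<inter> EH" "A' = (A' \<union> B') \<inter> EH" "B = (A \<union> B) - EH" "B' = (A' \<union> B') - EH"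
      using S1sub[OF h(1)] S1sub[OF h(3)] S2sub[OF h(2)] S2sub[OF h(4)] by blast+
    then show "A = A' \<and> B = B'" using h(5) by metis
  qed
  have "card S1 * card S2 = card (S1 \<times> S2)" by (simp add: card_cartesian_product)
  also have "\<dots> = card ((\<lambda>(A, B). A \<union> B) ` (S1 \<times> S2))" using card_image[OF inj] by simp
  also have "\<dots> \<le> card S" using un by (intro card_mono[OF finS]) auto
  finally show ?thesis unfolding tau_def S1_def S2_def S_def contr_E_def .
qed

end
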